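(* Over all 3-periodics of $\mathcal{E}$, the centroid $X_2^\dagger$ of the focus-inversive triangle moves on the circle with center and radius \[C_2^\dagger=\left(-c\left(1+\rho^2\frac{2a^2-b^2-\delta}{3a^2b^2}\right),0\right),\qquad R_2^\dagger=\rho^2\,\frac{2a^2-b^2-\delta}{3ab^2}.\]
   Context: Let $a>b>0$ and let $\mathcal{E}$ be the ellipse $x^2/a^2+y^2/b^2=1$. Set $c=\sqrt{a^2-b^2}$, $\delta=\sqrt{a^4-a^2b^2+b^4}$, and let the foci be $f_1=(-c,0)$, $f_2=(c,0)$. A 3-periodic is a triangle $P_1P_2P_3$ with vertices on $\mathcal{E}$ such that at each vertex the normal to $\mathcal{E}$ bisects the angle formed by the two sides meeting at that vertex; these form a one-parameter family (one through every point of $\mathcal{E}$). Fix $\rho>0$; the focus-inversive triangle has vertices $P_i^\dagger=f_1+(\rho/d_{1,i})^2(P_i-f_1)$, $d_{1,i}=|P_i-f_1|$. *)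

theory Defs
  imports "HOL-Analysis.Analysis"
begin

definition on_ellipse :: "real \<Rightarrow> real \<Rightarrow> real \<times> real \<Rightarrow> bool" where
  "on_ellipse a b P \<longleftrightarrow> (fst P)^2 / a^2 + (snd P)^2 / b^2 = 1"

definition ellipse_normal :: "real \<Rightarrow> real \<Rightarrow> real \<times> real \<Rightarrow> real \<times> real" where
  "ellipse_normal a b P = (fst P / a^2, snd P / b^2)"

text \<open>At vertex P with neighbours A and B, the normal to the ellipse bisects the angle APB:
  the internal bisector direction (sum of unit vectors along PA and PB) is parallel to the normal.\<close>
definition normal_bisects :: "real \<Rightarrow> real \<Rightarrow> real \<times> real \<Rightarrow> real \<times> real \<Rightarrow> real \<times> real \<Rightarrow> bool" where
  "normal_bisects a b A P B \<longleftrightarrow>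
     (let s = (1 / norm (A - P)) *\<^sub>R (A - P) + (1 / norm (B - P)) *\<^sub>R (B - P);
          n = ellipse_normal a b P
      in fst s * snd n - snd s * fst n = 0)"

definition three_periodic :: "real \<Rightarrow> real \<Rightarrow> real \<times> real \<Rightarrow> real \<times> real \<Rightarrow> real \<times> real \<Rightarrow> bool" where
  "three_periodic a b P1 P2 P3 \<longleftrightarrow>
     on_ellipse a b P1 \<and> on_ellipse a b P2 \<and> on_ellipse a b P3 \<and>
     P1 \<noteq> P2 \<and> P2 \<noteq> P3 \<and> P1 \<noteq> P3 \<and>
     normal_bisects a b P3 P1 P2 \<and> normal_bisects a b P1 P2 P3 \<and> normal_bisects a b P2 P3 P1"

definition invert :: "real \<times> real \<Rightarrow> real \<Rightarrow> real \<times> real \<Rightarrow> real \<times> real" where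
  "invert f \<rho> P = f + (\<rho> / norm (P - f))^2 *\<^sub>R (P - f)"

end

theory Submission
  imports Defs
begin


lemma key_vertex:
  fixes C2 S2 C3 S3 V1 V2 m :: real
  assumes u2: "C2^2+S2^2=1" and u3: "C3^2+S3^2=1" and ne: "(C2,S2)\<noteq>(C3,S3)"
    and h2: "V1*C2+V2*S2 = m" and h3: "V1*C3+V2*S3 = m"
  shows "(V1^2+V2^2)*(C2+C3) = 2*m*V1 \<and> (V1^2+V2^2)*(S2+S3) = 2*m*V2"
proof -
  have d1: "(C2-C3)*V1 + (S2-S3)*V2 = 0" using h2 h3 by (simp add: algebra_simps)
  have d2: "(C2-C3)*(C2+C3) + (S2-S3)*(S2+S3) = 0" using u2 u3 by (simp add: algebra_simps power2_eq_square)
  have cr: "V1*(S2+S3) - V2*(C2+C3) = 0"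
  proof -
    have e1: "(C2-C3)*(V1*(S2+S3) - V2*(C2+C3)) = 0" using d1 d2 by algebra
    have e2: "(S2-S3)*(V1*(S2+S3) - V2*(C2+C3)) = 0" using d1 d2 by algebra
    have "C2-C3 \<noteq> 0 \<or> S2-S3 \<noteq> 0" using ne by auto
    then show ?thesis using e1 e2 by auto
  qed
  have s: "V1*(C2+C3) + V2*(S2+S3) = 2*m" using h2 h3 by (simp add: algebra_simps)
  have "(V1^2+V2^2)*(C2+C3) = V1*(V1*(C2+C3) + V2*(S2+S3)) - V2*(V1*(S2+S3) - V2*(C2+C3))"
    by (simp add: algebra_simps power2_eq_square)
  moreover have "(V1^2+V2^2)*(S2+S3) = V2*(V1*(C2+C3) + V2*(S2+S3)) + V1*(V1*(S2+S3) - V2*(C2+C3))"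
    by (simp add: algebra_simps power2_eq_square)
  ultimately show ?thesis using s cr by simp
qed

lemma vertex_Z:
  fixes C1 S1 C2 S2 C3 S3 K0 K1 :: real
  assumes "C1^2+S1^2=1" "C2^2+S2^2=1" "C3^2+S3^2=1" "(C2,S2)\<noteq>(C3,S3)"
    "C1*C2+S1*S2 = K0 + K1*(C1+C2)" "C1*C3+S1*S3 = K0+K1*(C1+C3)"
  shows "((C1-K1)^2+S1^2)*(C1+C2+C3-K1) = (2*K0+1+K1^2)*(C1-K1)
       \<and> ((C1-K1)^2+S1^2)*(S1+S2+S3) = (2*K0+1+K1^2)*S1"
proof -
  have k: "((C1-K1)^2+S1^2)*(C2+C3) = 2*(K0+K1*C1)*(C1-K1) \<and> ((C1-K1)^2+S1^2)*(S2+S3) = 2*(K0+K1*C1)*S1"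
    apply (rule key_vertex[OF assms(2,3,4)])
    using assms(5,6) by (simp_all add: algebra_simps)
  have n: "(C1-K1)^2+S1^2 = 1 - 2*K1*C1 + K1^2" using assms(1) by (simp add: algebra_simps power2_eq_square)
  have k1: "((C1-K1)^2+S1^2)*(C2+C3) = 2*(K0+K1*C1)*(C1-K1)" using k by simp
  have k2: "((C1-K1)^2+S1^2)*(S2+S3) = 2*(K0+K1*C1)*S1" using k by simp
  show ?thesis
  proof
    show "((C1-K1)^2+S1^2)*(C1+C2+C3-K1) = (2*K0+1+K1^2)*(C1-K1)" using k1 n by algebra
    show "((C1-K1)^2+S1^2)*(S1+S2+S3) = (2*K0+1+K1^2)*S1" using k2 n by algebra
  qed
qed

lemma line3:
  fixes p1 p2 q1 q2 t1 t2 t3 :: real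
  assumes "(p1+t1*q1)^2+(p2+t1*q2)^2 = 1" "(p1+t2*q1)^2+(p2+t2*q2)^2 = 1" "(p1+t3*q1)^2+(p2+t3*q2)^2 = 1"
    and "(p1+t1*q1, p2+t1*q2) \<noteq> (p1+t2*q1, p2+t2*q2)"
    and "(p1+t2*q1, p2+t2*q2) \<noteq> (p1+t3*q1, p2+t3*q2)"
    and "(p1+t1*q1, p2+t1*q2) \<noteq> (p1+t3*q1, p2+t3*q2)"
  shows False
proof -
  define A where "A = q1^2+q2^2"
  define B where "B = 2*(p1*q1+p2*q2)"
  have f: "A*t^2 + B*t + (p1^2+p2^2-1) = (p1+t*q1)^2+(p2+t*q2)^2 - 1" for t
    unfolding A_def B_def by (simp add: algebra_simps power2_eq_square)
  have r1: "A*t1^2 + B*t1 + (p1^2+p2^2-1) = 0" using f[of t1] assms(1) by linarith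
  have r2: "A*t2^2 + B*t2 + (p1^2+p2^2-1) = 0" using f[of t2] assms(2) by linarith
  have r3: "A*t3^2 + B*t3 + (p1^2+p2^2-1) = 0" using f[of t3] assms(3) by linarith
  have t12: "t1 \<noteq> t2" using assms(4) by auto
  have t23: "t2 \<noteq> t3" using assms(5) by auto
  have t13: "t1 \<noteq> t3" using assms(6) by auto
  have "(t1-t2)*(A*(t1+t2)+B) = 0" using r1 r2 by (simp add: algebra_simps power2_eq_square)
  hence a12: "A*(t1+t2)+B = 0" using t12 by simp
  have "(t1-t3)*(A*(t1+t3)+B) = 0" using r1 r3 by (simp add: algebra_simps power2_eq_square)
  hence a13: "A*(t1+t3)+B = 0" using t13 by simp
  have "A*(t2-t3) = 0" using a12 a13 by algebra
  hence "A = 0" using t23 by simp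
  hence "q1 = 0 \<and> q2 = 0" unfolding A_def by (simp add: sum_power2_eq_zero_iff)
  thus False using assms(4) by simp
qed

lemma core:
  fixes C1 S1 C2 S2 C3 S3 K0 K1 :: real
  assumes u1: "C1^2+S1^2=1" and u2: "C2^2+S2^2=1" and u3: "C3^2+S3^2=1"
    and n12: "(C1,S1)\<noteq>(C2,S2)" and n23: "(C2,S2)\<noteq>(C3,S3)" and n13: "(C1,S1)\<noteq>(C3,S3)"
    and r12: "C1*C2+S1*S2 = K0 + K1*(C1+C2)" and r23: "C2*C3+S2*S3 = K0+K1*(C2+C3)"
    and r13: "C1*C3+S1*S3 = K0+K1*(C1+C3)"
  shows "2*K0+1+K1^2 = 0 \<and> C1+C2+C3 = K1 \<and> S1+S2+S3 = 0"
proof -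
  define Z where "Z = 2*K0+1+K1^2"
  define X where "X = C1+C2+C3-K1"
  define Y where "Y = S1+S2+S3"
  have v1: "((C1-K1)^2+S1^2)*X = Z*(C1-K1) \<and> ((C1-K1)^2+S1^2)*Y = Z*S1"
    using vertex_Z[OF u1 u2 u3 n23 r12 r13] unfolding X_def Y_def Z_def .
  have v2: "((C2-K1)^2+S2^2)*X = Z*(C2-K1) \<and> ((C2-K1)^2+S2^2)*Y = Z*S2"
  proof -
    have a: "C2*C1+S2*S1 = K0 + K1*(C2+C1)" "C2*C3+S2*S3 = K0+K1*(C2+C3)" using r12 r23 by (simp_all add: algebra_simps)
    show ?thesis using vertex_Z[OF u2 u1 u3 n13 a] unfolding X_def Y_def Z_def by (simp add: algebra_simps)
  qed
  have v3: "((C3-K1)^2+S3^2)*X = Z*(C3-K1) \<and> ((C3-K1)^2+S3^2)*Y = Z*S3"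
  proof -
    have a: "C3*C1+S3*S1 = K0 + K1*(C3+C1)" "C3*C2+S3*S2 = K0+K1*(C3+C2)" using r13 r23 by (simp_all add: algebra_simps)
    show ?thesis using vertex_Z[OF u3 u1 u2 n12 a] unfolding X_def Y_def Z_def by (simp add: algebra_simps)
  qed
  have Z0: "Z = 0"
  proof (rule ccontr)
    assume Zn: "Z \<noteq> 0"
    define t1 where "t1 = ((C1-K1)^2+S1^2)/Z"
    define t2 where "t2 = ((C2-K1)^2+S2^2)/Z"
    define t3 where "t3 = ((C3-K1)^2+S3^2)/Z"
    have e1: "C1 = K1 + t1*X" "S1 = 0 + t1*Y" using v1 Zn unfolding t1_def by (auto simp: field_simps)
    have e2: "C2 = K1 + t2*X" "S2 = 0 + t2*Y" using v2 Zn unfolding t2_def by (auto simp: field_simps)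
    have e3: "C3 = K1 + t3*X" "S3 = 0 + t3*Y" using v3 Zn unfolding t3_def by (auto simp: field_simps)
    show False
      apply (rule line3[of K1 t1 X 0 Y t2 t3])
      using u1 u2 u3 n12 n23 n13 e1 e2 e3 by simp_all
  qed
  have XY: "X = 0 \<and> Y = 0"
  proof (cases "(C1-K1)^2+S1^2 = 0")
    case True
    hence c1: "C1 = K1 \<and> S1 = 0" by (simp add: sum_power2_eq_zero_iff)
    show ?thesis
    proof (cases "(C2-K1)^2+S2^2 = 0")
      case True
      hence "C2 = K1 \<and> S2 = 0" by (simp add: sum_power2_eq_zero_iff)
      then show ?thesis using c1 n12 by simp
    next
      case False
      then show ?thesis using v2 Z0 by auto
    qed
  next
    case False
    then show ?thesis using v1 Z0 by auto
  qed
  show ?thesis using Z0 XY unfolding Z_def X_def Y_def by simp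
qed


definition gg :: "real \<Rightarrow> real \<Rightarrow> real \<times> real \<Rightarrow> real \<times> real \<Rightarrow> real" where
  "gg a b P Q = (fst Q - fst P) * fst P/a^2 + (snd Q - snd P) * snd P/b^2"
definition hh :: "real \<times> real \<Rightarrow> real \<times> real \<Rightarrow> real" where
  "hh P Q = (fst Q - fst P)^2 + (snd Q - snd P)^2"

lemma norm_pair_sq: "norm ((x::real),(y::real)) = sqrt (x^2+y^2)"
  by (simp add: norm_Pair)

lemma refl_eq:
  fixes a b xa ya x y xb yb :: real
  assumes nb: "normal_bisects a b (xa,ya) (x,y) (xb,yb)"
    and ab: "a > 0" "b > 0"
    and nA: "(xa,ya) \<noteq> (x,y)" and nB: "(xb,yb) \<noteq> (x,y)"
  shows "(gg a b (x,y) (xa,ya))^2 / hh (x,y) (xa,ya) = (gg a b (x,y) (xb,yb))^2 / hh (x,y) (xb,yb)"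
proof -
  define n1 where "n1 = x/a^2"
  define n2 where "n2 = y/b^2"
  define NA where "NA = sqrt ((xa-x)^2+(ya-y)^2)"
  define NB where "NB = sqrt ((xb-x)^2+(yb-y)^2)"
  have hA: "hh (x,y) (xa,ya) = NA^2" unfolding hh_def NA_def by simp
  have hB: "hh (x,y) (xb,yb) = NB^2" unfolding hh_def NB_def by simp
  have pA: "(xa-x)^2+(ya-y)^2 > 0" using nA by (auto simp: sum_power2_gt_zero_iff)
  have pB: "(xb-x)^2+(yb-y)^2 > 0" using nB by (auto simp: sum_power2_gt_zero_iff)
  have NA0: "NA > 0" unfolding NA_def using pA by simp
  have NB0: "NB > 0" unfolding NB_def using pB by simp
  define u1 where "u1 = (xa-x)/NA"
  define u2 where "u2 = (ya-y)/NA"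
  define w1 where "w1 = (xb-x)/NB"
  define w2 where "w2 = (yb-y)/NB"
  have uu: "u1^2+u2^2 = 1"
  proof -
    have "NA^2 = (xa-x)^2+(ya-y)^2" unfolding NA_def using pA by simp
    thus ?thesis unfolding u1_def u2_def using NA0 nA by (simp add: power_divide add_divide_distrib[symmetric])
  qed
  have ww: "w1^2+w2^2 = 1"
  proof -
    have "NB^2 = (xb-x)^2+(yb-y)^2" unfolding NB_def using pB by simp
    thus ?thesis unfolding w1_def w2_def using NB0 nB by (simp add: power_divide add_divide_distrib[symmetric])
  qed
  have cr: "(u1+w1)*n2 - (u2+w2)*n1 = 0"
    using nb unfolding normal_bisects_def Let_def ellipse_normal_def u1_def u2_def w1_def w2_def n1_def n2_def NA_def NB_def
    by (simp add: norm_pair_sq)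
  have gA: "gg a b (x,y) (xa,ya) = NA*(u1*n1+u2*n2)" unfolding gg_def u1_def u2_def n1_def n2_def using NA0 ab
    by (simp add: field_simps)
  have gB: "gg a b (x,y) (xb,yb) = NB*(w1*n1+w2*n2)" unfolding gg_def w1_def w2_def n1_def n2_def using NB0 ab
    by (simp add: field_simps)
  have "(u1*n1+u2*n2)^2 = (n1^2+n2^2) - (u1*n2-u2*n1)^2" using uu by algebra
  moreover have "(w1*n1+w2*n2)^2 = (n1^2+n2^2) - (w1*n2-w2*n1)^2" using ww by algebra
  moreover have "(u1*n2-u2*n1)^2 = (w1*n2-w2*n1)^2" using cr by algebra
  ultimately have e: "(u1*n1+u2*n2)^2 = (w1*n1+w2*n2)^2" by simp
  show ?thesis unfolding gA gB hA hB using NA0 NB0 e by (simp add: power_mult_distrib)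
qed

lemma chord_poly:
  fixes a b c x y x' y' :: real
  assumes "c^2 = a^2 - b^2" "x^2 * b^2 + y^2 * a^2 = a^2*b^2" "x'^2 * b^2 + y'^2 * a^2 = a^2*b^2"
  shows "(((x'-x)^2+(y'-y)^2) * a^4*b^4 + c^2*((x'-x)*x*b^2 + (y'-y)*y*a^2)^2) * ((x+c)*(x'+c)+y*y') * a^2
   = (((x'-x)^2+(y'-y)^2)*a^4*b^4 + (b^2-3*a^2)*((x'-x)*x*b^2 + (y'-y)*y*a^2)^2) * (a^2+c*x) * (a^2 + c*x')
     + 2*a*c*((x'-x)*x*b^2 + (y'-y)*y*a^2)^2 * ((x+c)*(a^2+c*x') + (x'+c)*(a^2+c*x)) * a"
  using assms by algebra

lemma ell_mult: assumes "on_ellipse a b (x,y)" "a > 0" "b > 0" shows "x^2 * b^2 + y^2 * a^2 = a^2*b^2"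
  using assms unfolding on_ellipse_def by (simp add: field_simps)

lemma ell_bound: assumes "on_ellipse a b (x,y)" "a > 0" "b > 0" shows "\<bar>x\<bar> \<le> a"
proof -
  have "x^2 * b^2 \<le> a^2*b^2" using ell_mult[OF assms] by (smt (verit) mult_nonneg_nonneg zero_le_power2)
  hence "x^2 \<le> a^2" using assms(3) by simp
  thus ?thesis using assms(2) by (metis abs_le_square_iff abs_of_pos)
qed

lemma focal:
  fixes a b c x y :: real
  assumes ab: "a > b" "b > 0" and c: "c = sqrt (a^2-b^2)" and e: "on_ellipse a b (x,y)"
  shows "a + c*x/a > 0" "((x+c)/(a + c*x/a))^2 + (y/(a + c*x/a))^2 = 1"
    "(a + c*x/a)*(a - c*((x+c)/(a + c*x/a))) = b^2"
    "sqrt ((x+c)^2+y^2) = a + c*x/a"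
proof -
  have a0: "a > 0" using ab by simp
  have "b^2 \<le> a^2" using ab by (simp add: power_mono)
  hence cc: "c^2 = a^2-b^2" using c by simp
  have c0: "c \<ge> 0" using c \<open>b^2 \<le> a^2\<close> by simp
  have "c^2 < a^2" using cc ab by simp
  hence "c < a" using a0 c0 by (simp add: power_less_imp_less_base)
  have xa: "\<bar>x\<bar> \<le> a" using ell_bound[OF e a0 ab(2)] .
  have "c*\<bar>x\<bar> \<le> c*a" using xa c0 by (simp add: mult_left_mono)
  hence "c*x \<ge> -(c*a)" by (smt (verit) abs_le_iff mult_minus_right abs_mult c0 abs_of_nonneg)
  hence "c*x/a \<ge> -c" using a0 by (simp add: field_simps)
  thus r0: "a + c*x/a > 0" using \<open>c < a\<close> by linarith
  have em: "x^2 * b^2 + y^2 * a^2 = a^2*b^2" using ell_mult[OF e a0 ab(2)] .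
  have sq: "(x+c)^2+y^2 = (a + c*x/a)^2"
  proof -
    have "a^2*((x+c)^2+y^2) = a^2*(a + c*x/a)^2" using em cc a0 by (simp add: field_simps power2_eq_square) algebra
    thus ?thesis using a0 by simp
  qed
  show "((x+c)/(a + c*x/a))^2 + (y/(a + c*x/a))^2 = 1" using sq r0
    by (simp add: power_divide add_divide_distrib[symmetric])
  have "(a + c*x/a)*(a - c*((x+c)/(a + c*x/a))) = (a + c*x/a)*a - c*(x+c)"
    using r0 by (simp add: right_diff_distrib)
  also have "\<dots> = a^2 - c^2" using a0 by (simp add: field_simps power2_eq_square)
  finally show "(a + c*x/a)*(a - c*((x+c)/(a + c*x/a))) = b^2" using cc by simp
  show "sqrt ((x+c)^2+y^2) = a + c*x/a" using sq r0 by simp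
qed

lemma chord:
  fixes a b c x y x' y' :: real
  assumes ab: "a > b" "b > 0" and c: "c = sqrt (a^2-b^2)"
    and e1: "on_ellipse a b (x,y)" and e2: "on_ellipse a b (x',y')" and ne: "(x,y) \<noteq> (x',y')"
  defines "lam \<equiv> a^2*b^2*(gg a b (x,y) (x',y'))^2 / hh (x,y) (x',y')"
  shows "(a^2*b^2+lam*c^2)*(((x+c)/(a + c*x/a))*((x'+c)/(a + c*x'/a)) + (y/(a + c*x/a))*(y'/(a + c*x'/a)))
     = a^2*b^2 + lam*(b^2-3*a^2) + 2*lam*a*c*((x+c)/(a + c*x/a) + (x'+c)/(a + c*x'/a))"
proof -
  have a0: "a > 0" using ab by simp
  have "b^2 \<le> a^2" using ab by (simp add: power_mono)
  hence cc: "c^2 = a^2-b^2" using c by simp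
  have r1: "a + c*x/a > 0" using focal(1)[OF ab c e1] .
  have r2: "a + c*x'/a > 0" using focal(1)[OF ab c e2] .
  define R where "R = a^2 + c*x"
  define R' where "R' = a^2 + c*x'"
  have R1: "a + c*x/a = R/a" unfolding R_def using a0 by (simp add: field_simps power2_eq_square)
  have R2: "a + c*x'/a = R'/a" unfolding R'_def using a0 by (simp add: field_simps power2_eq_square)
  have R0: "R > 0" "R' > 0" using r1 r2 R1 R2 a0 by (auto simp: zero_less_divide_iff)
  define G where "G = (x'-x)*x*b^2 + (y'-y)*y*a^2"
  define H where "H = (x'-x)^2+(y'-y)^2"
  have H0: "H > 0" unfolding H_def using ne by (auto simp: sum_power2_gt_zero_iff)
  have gG: "gg a b (x,y) (x',y') = G/(a^2*b^2)" unfolding gg_def G_def using a0 ab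
    by (simp add: field_simps)
  have hH: "hh (x,y) (x',y') = H" unfolding hh_def H_def by simp
  have lamG: "lam = G^2/(a^2*b^2*H)" unfolding lam_def gG hH
    using a0 ab by (simp add: field_simps power2_eq_square)
  define T where "T = (x+c)*(x'+c)+y*y'"
  define U where "U = (x+c)*R' + (x'+c)*R"
  have P: "(H * a^4*b^4 + c^2*G^2) * T * a^2 = (H*a^4*b^4 + (b^2-3*a^2)*G^2) * R * R' + 2*a*c*G^2 * U * a"
    unfolding H_def G_def T_def U_def R_def R'_def
    using chord_poly[OF cc ell_mult[OF e1 a0 ab(2)] ell_mult[OF e2 a0 ab(2)]] by simp
  have L: "(a^2*b^2+lam*c^2)*(((x+c)/(a + c*x/a))*((x'+c)/(a + c*x'/a)) + (y/(a + c*x/a))*(y'/(a + c*x'/a)))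
     = (H * a^4*b^4 + c^2*G^2) * T * a^2 / (a^2*b^2*H*R*R')"
    unfolding R1 R2 lamG T_def using a0 ab R0 H0 by (simp add: field_simps power2_eq_square power4_eq_xxxx)
  have Rr: "a^2*b^2 + lam*(b^2-3*a^2) + 2*lam*a*c*((x+c)/(a + c*x/a) + (x'+c)/(a + c*x'/a))
     = ((H*a^4*b^4 + (b^2-3*a^2)*G^2) * R * R' + 2*a*c*G^2 * U * a) / (a^2*b^2*H*R*R')"
    unfolding R1 R2 lamG U_def using a0 ab R0 H0 by (simp add: field_simps power2_eq_square power4_eq_xxxx)
  show ?thesis using L Rr P by simp
qed



lemma final_alg:
  fixes a b c \<delta> lam K0 K1 :: real
  assumes ab: "a > b" "b > 0" and c: "c = sqrt (a^2-b^2)" and d: "\<delta> = sqrt (a^4 - a^2*b^2 + b^4)"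
    and l0: "lam \<ge> 0"
    and K0: "K0 = (a^2*b^2 + lam*(b^2-3*a^2))/(a^2*b^2+lam*c^2)"
    and K1: "K1 = 2*lam*a*c/(a^2*b^2+lam*c^2)"
    and Z: "2*K0+1+K1^2 = 0"
  shows "K1 > 0 \<and> c*K1 = (2*a^2-b^2-\<delta>)/a \<and> a*K1 - c*(K1^2+3)/2 + c*(2*a^2-b^2-\<delta>)/a^2 = 0"
proof -
  have a0: "a > 0" using ab by simp
  have ba: "b^2 < a^2" using ab by (simp add: power_strict_mono)
  hence cc: "c^2 = a^2-b^2" using c by simp
  have c0: "c > 0" using c ba by simp
  have dpos: "a^4 - a^2*b^2 + b^4 \<ge> 0"
  proof -
    have e: "a^4 - a^2*b^2 + b^4 = (a^2 - b^2)^2 + a^2*b^2" by (simp add: algebra_simps power2_eq_square power4_eq_xxxx)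
    have "0 \<le> (a^2 - b^2)^2 + a^2*b^2" by simp
    thus ?thesis using e by linarith
  qed
  have dd: "\<delta>^2 = a^4 - a^2*b^2 + b^4" using d dpos by simp
  have d0: "\<delta> \<ge> 0" using d dpos by simp
  define D where "D = a^2*b^2+lam*c^2"
  have D0: "D > 0" unfolding D_def using a0 ab l0 by (simp add: add_pos_nonneg)
  have quad: "lam^2*c^4 + 2*lam*a^2*b^2*(a^2+b^2) - 3*a^4*b^4 = 0"
  proof -
    have K0': "K0 = (a^2*b^2 + lam*(b^2-3*a^2))/D" using K0 D_def by simp
    have K1': "K1 = (2*lam*a*c)/D" using K1 D_def by simp
    have "(2*K0+1+K1^2)*D^2 = 2*(a^2*b^2 + lam*(b^2-3*a^2))*D + D^2 + (2*lam*a*c)^2"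
      unfolding K0' K1' using D0 by (simp add: field_simps power2_eq_square)
    also have "\<dots> = -(lam^2*c^4 + 2*lam*a^2*b^2*(a^2+b^2) - 3*a^4*b^4)"
      unfolding D_def using cc by algebra
    finally have "(2*K0+1+K1^2)*D^2 = -(lam^2*c^4 + 2*lam*a^2*b^2*(a^2+b^2) - 3*a^4*b^4)" .
    thus ?thesis using Z by simp
  qed
  define q where "q = \<delta> - b^2"
  have qb: "q*(q + 2*b^2) = a^2*c^2" unfolding q_def using dd cc by algebra
  have q0: "q > 0"
  proof -
    have "\<delta>^2 > (b^2)^2" using dd ba ab by (simp add: power4_eq_xxxx power2_eq_square mult_strict_mono)
    hence "\<delta> > b^2" using d0 by (smt (verit) power_mono zero_le_power2)
    thus ?thesis unfolding q_def by simp
  qed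
  define L where "L = 2*q - c^2"
  have L0: "L > 0"
  proof -
    have "4*\<delta>^2 - (a^2+b^2)^2 = 3*c^4" using dd cc by algebra
    moreover have "c^4 > 0" using c0 by simp
    ultimately have "4*\<delta>^2 > (a^2+b^2)^2" by linarith
    hence "(2*\<delta>)^2 > (a^2+b^2)^2" by (simp add: power_mult_distrib)
    hence "2*\<delta> > a^2+b^2" using d0 by (smt (verit) power_mono zero_le_power2)
    thus ?thesis unfolding L_def q_def using cc by simp
  qed
  define l0v where "l0v = a^2*b^2*L/c^4"
  define l1v where "l1v = a^2*b^2*(-2*\<delta>-a^2-b^2)/c^4"
  have fac: "c^4*(lam - l0v)*(lam - l1v) = lam^2*c^4 + 2*lam*a^2*b^2*(a^2+b^2) - 3*a^4*b^4"
    unfolding l0v_def l1v_def L_def q_def using c0 dd cc by (simp add: field_simps) algebra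
  have l1n: "l1v < 0"
  proof -
    have "-2*\<delta>-a^2-b^2 < 0" using d0 a0 by (smt (verit) zero_less_power2 zero_le_power2)
    moreover have "a^2*b^2 > 0" using a0 ab by simp
    ultimately have "a^2*b^2*(-2*\<delta>-a^2-b^2) < 0" by (simp add: mult_pos_neg)
    thus ?thesis unfolding l1v_def using c0 by (simp add: divide_neg_pos)
  qed
  have lv: "lam = l0v" using fac quad l0 l1n c0 by auto
  have Dv: "a^2*b^2+lam*c^2 = a^2*b^2*(2*q)/c^2"
    unfolding lv l0v_def L_def using c0 by (simp add: field_simps power2_eq_square power4_eq_xxxx)
  have K1v: "K1 = a*L/(c*q)"
  proof -
    have "K1 = 2*(a^2*b^2*L/c^4)*a*c/(a^2*b^2*(2*q)/c^2)" unfolding K1 Dv using lv l0v_def by simp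
    also have "\<dots> = a*L/(c*q)" using c0 q0 a0 ab by (simp add: field_simps power2_eq_square power4_eq_xxxx)
    finally show ?thesis .
  qed
  have M: "(2*a^2-b^2-\<delta>) * q = a^2*L" unfolding L_def q_def using dd cc by algebra
  show ?thesis
  proof (intro conjI)
    show "K1 > 0" unfolding K1v using L0 c0 q0 a0 by simp
    show "c*K1 = (2*a^2-b^2-\<delta>)/a" unfolding K1v using M c0 q0 a0 by (simp add: field_simps power2_eq_square)
    show "a*K1 - c*(K1^2+3)/2 + c*(2*a^2-b^2-\<delta>)/a^2 = 0"
    proof -
      have qd: "\<delta> = q + b^2" unfolding q_def by simp
      show ?thesis unfolding K1v using M c0 q0 a0 qb qd cc unfolding L_def by (simp add: field_simps power2_eq_square) algebra
    qed
  qed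
qed


lemma re_mult_unit: fixes z :: complex assumes "cmod z = 1"
  shows "of_real (Re z) * z = (z^2 + 1)/2"
proof -
  have zc: "z * cnj z = 1" using assms by (metis complex_norm_square mult.commute of_real_1 power_one)
  have "of_real (2*Re z) = z + cnj z" by (simp add: complex_add_cnj)
  hence "of_real (Re z) = (z + cnj z)/2" by (metis of_real_mult of_real_numeral nonzero_mult_div_cancel_left zero_neq_numeral)
  hence "of_real (Re z) * z = (z*z + z * cnj z)/2" by (simp add: algebra_simps)
  thus ?thesis using zc by (simp add: power2_eq_square)
qed

lemma cplx_final:
  fixes z1 z2 z3 :: complex and al ga K1 E :: real
  assumes u: "cmod z1 = 1" "cmod z2 = 1" "cmod z3 = 1"
    and s: "z1+z2+z3 = of_real K1"
    and A: "al*K1 - ga*(K1^2+3)/2 + E = 0"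
  shows "cmod ((of_real (al - ga*Re z1))*z1 + (of_real (al - ga*Re z2))*z2 + (of_real (al - ga*Re z3))*z3 + of_real E)
     = \<bar>ga*K1\<bar>"
proof -
  have c1: "cnj z1 = 1/z1" using u(1) by (metis complex_div_cnj div_by_1 mult.commute power_one complex_norm_square nonzero_mult_div_cancel_left norm_eq_zero zero_neq_one of_real_1)
  have c2: "cnj z2 = 1/z2" using u(2) by (metis complex_div_cnj div_by_1 mult.commute power_one complex_norm_square nonzero_mult_div_cancel_left norm_eq_zero zero_neq_one of_real_1)
  have c3: "cnj z3 = 1/z3" using u(3) by (metis complex_div_cnj div_by_1 mult.commute power_one complex_norm_square nonzero_mult_div_cancel_left norm_eq_zero zero_neq_one of_real_1)
  have nz: "z1 \<noteq> 0" "z2 \<noteq> 0" "z3 \<noteq> 0" using u by auto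
  have "cnj (z1+z2+z3) = of_real K1" using s by simp
  hence cs: "1/z1 + 1/z2 + 1/z3 = of_real K1" using c1 c2 c3 by simp
  have pair: "z1*z2+z2*z3+z1*z3 = z1*z2*z3* of_real K1"
  proof -
    have "z1*z2*z3*(1/z1 + 1/z2 + 1/z3) = z1*z2+z2*z3+z1*z3" using nz by (simp add: field_simps)
    thus ?thesis using cs by simp
  qed
  have sq: "z1^2+z2^2+z3^2 = (of_real K1)^2 - 2*(z1*z2*z3* of_real K1)"
  proof -
    have "(z1+z2+z3)^2 = z1^2+z2^2+z3^2 + 2*(z1*z2+z2*z3+z1*z3)" by (simp add: power2_eq_square algebra_simps)
    thus ?thesis using s pair by simp
  qed
  have "(of_real (al - ga*Re z1))*z1 + (of_real (al - ga*Re z2))*z2 + (of_real (al - ga*Re z3))*z3 + of_real E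
      = of_real al*(z1+z2+z3) - of_real ga*(of_real (Re z1)*z1 + of_real (Re z2)*z2 + of_real (Re z3)*z3) + of_real E"
    by (simp add: algebra_simps)
  also have "\<dots> = of_real al*(z1+z2+z3) - of_real ga*((z1^2+z2^2+z3^2) + 3)/2 + of_real E"
    by (simp only: re_mult_unit[OF u(1)] re_mult_unit[OF u(2)] re_mult_unit[OF u(3)]) (simp add: field_simps)
  also have "\<dots> = of_real (al*K1 - ga*(K1^2+3)/2 + E) + of_real (ga*K1)*(z1*z2*z3)"
    unfolding s sq by (simp add: field_simps power2_eq_square)
  also have "\<dots> = of_real (ga*K1)*(z1*z2*z3)" using A by simp
  finally show ?thesis using u by (simp add: norm_mult abs_mult)
qed

lemma gg_sym:
  assumes "on_ellipse a b (x,y)" "on_ellipse a b (x',y')"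
  shows "gg a b (x,y) (x',y') = gg a b (x',y') (x,y)"
  using assms unfolding gg_def on_ellipse_def by (simp add: algebra_simps power2_eq_square diff_divide_distrib add_divide_distrib) 

lemma hh_sym: "hh P Q = hh Q P"
  unfolding hh_def by (simp add: power2_commute)

lemma inv_pt:
  fixes a b c x y \<rho> :: real
  assumes ab: "a > b" "b > 0" and c: "c = sqrt (a^2-b^2)" and e: "on_ellipse a b (x,y)"
  shows "invert (-c,0) \<rho> (x,y) = (-c + \<rho>^2*(a - c*((x+c)/(a + c*x/a)))*((x+c)/(a + c*x/a))/b^2,
                                   \<rho>^2*(a - c*((x+c)/(a + c*x/a)))*(y/(a + c*x/a))/b^2)"
proof -
  define r where "r = a + c*x/a"
  have r0: "r > 0" unfolding r_def using focal(1)[OF ab c e] .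
  have nr: "norm ((x,y) - (-c,0)) = r" unfolding r_def using focal(4)[OF ab c e] by (simp add: norm_Pair)
  have rb: "r*(a - c*((x+c)/r)) = b^2" unfolding r_def using focal(3)[OF ab c e] .
  have ar: "(a - c*((x+c)/r))/b^2 = 1/r" using rb r0 ab by (simp add: field_simps)
  have "invert (-c,0) \<rho> (x,y) = (-c + (\<rho>/r)^2*(x+c), (\<rho>/r)^2*y)"
    unfolding invert_def nr by simp
  also have "\<dots> = (-c + \<rho>^2*(a - c*((x+c)/r))*((x+c)/r)/b^2, \<rho>^2*(a - c*((x+c)/r))*(y/r)/b^2)"
  proof -
    have "\<rho>^2*(a - c*((x+c)/r))*((x+c)/r)/b^2 = \<rho>^2*((a - c*((x+c)/r))/b^2)*((x+c)/r)" by simp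
    also have "\<dots> = (\<rho>/r)^2*(x+c)" unfolding ar using r0 by (simp add: field_simps power2_eq_square)
    finally have 1: "\<rho>^2*(a - c*((x+c)/r))*((x+c)/r)/b^2 = (\<rho>/r)^2*(x+c)" .
    have "\<rho>^2*(a - c*((x+c)/r))*(y/r)/b^2 = \<rho>^2*((a - c*((x+c)/r))/b^2)*(y/r)" by simp
    also have "\<dots> = (\<rho>/r)^2*y" unfolding ar using r0 by (simp add: field_simps power2_eq_square)
    finally have 2: "\<rho>^2*(a - c*((x+c)/r))*(y/r)/b^2 = (\<rho>/r)^2*y" .
    show ?thesis using 1 2 by simp
  qed
  finally show ?thesis unfolding r_def .
qed

lemma focal_inj:
  fixes a b c x y x' y' :: real
  assumes ab: "a > b" "b > 0" and c: "c = sqrt (a^2-b^2)"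
    and e1: "on_ellipse a b (x,y)" and e2: "on_ellipse a b (x',y')"
    and eq: "((x+c)/(a + c*x/a), y/(a + c*x/a)) = ((x'+c)/(a + c*x'/a), y'/(a + c*x'/a))"
  shows "(x,y) = (x',y')"
proof -
  define r where "r = a + c*x/a"
  define r' where "r' = a + c*x'/a"
  have r0: "r > 0" "r' > 0" unfolding r_def r'_def using focal(1)[OF ab c e1] focal(1)[OF ab c e2] by auto
  have rb: "r*(a - c*((x+c)/r)) = b^2" unfolding r_def using focal(3)[OF ab c e1] .
  have rb': "r'*(a - c*((x'+c)/r')) = b^2" unfolding r'_def using focal(3)[OF ab c e2] .
  have C: "(x+c)/r = (x'+c)/r'" and S: "y/r = y'/r'" using eq unfolding r_def r'_def by auto
  have "r*(a - c*((x+c)/r)) = r'*(a - c*((x+c)/r))" using rb rb' C by simp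
  moreover have "a - c*((x+c)/r) \<noteq> 0" using rb ab by auto
  ultimately have rr: "r = r'" by simp
  have "x = x'" using C rr r0 by (simp add: field_simps)
  moreover have "y = y'" using S rr r0 by (simp add: field_simps)
  ultimately show ?thesis by simp
qed


theorem mainTheorem11:
  fixes a b \<rho> c \<delta> :: real and P1 P2 P3 :: "real \<times> real"
  assumes "a > b" and "b > 0" and "\<rho> > 0"
    and "c = sqrt (a^2 - b^2)"
    and "\<delta> = sqrt (a^4 - a^2 * b^2 + b^4)"
    and "three_periodic a b P1 P2 P3"
  shows "dist ((1/3) *\<^sub>R (invert (-c, 0) \<rho> P1 + invert (-c, 0) \<rho> P2 + invert (-c, 0) \<rho> P3))
              (- c * (1 + \<rho>^2 * (2 * a^2 - b^2 - \<delta>) / (3 * a^2 * b^2)), 0)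
         = \<rho>^2 * (2 * a^2 - b^2 - \<delta>) / (3 * a * b^2)"
proof -
  note ab = assms(1,2)
  note cdef = assms(4)
  have a0: "a > 0" using ab by simp
  have "b^2 < a^2" using ab by (simp add: power_strict_mono)
  hence cc: "c^2 = a^2-b^2" and c0: "c > 0" using cdef by auto
  obtain x1 y1 where P1: "P1 = (x1,y1)" by fastforce
  obtain x2 y2 where P2: "P2 = (x2,y2)" by fastforce
  obtain x3 y3 where P3: "P3 = (x3,y3)" by fastforce
  note tp = assms(6)[unfolded three_periodic_def P1 P2 P3]
  have e1: "on_ellipse a b (x1,y1)" and e2: "on_ellipse a b (x2,y2)" and e3: "on_ellipse a b (x3,y3)"
    using tp by auto
  have n12: "(x1,y1) \<noteq> (x2,y2)" and n23: "(x2,y2) \<noteq> (x3,y3)" and n13: "(x1,y1) \<noteq> (x3,y3)"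
    using tp by auto
  have nb1: "normal_bisects a b (x3,y3) (x1,y1) (x2,y2)" and nb2: "normal_bisects a b (x1,y1) (x2,y2) (x3,y3)"
    using tp by auto
  define C1 where "C1 = (x1+c)/(a + c*x1/a)"
  define S1 where "S1 = y1/(a + c*x1/a)"
  define C2 where "C2 = (x2+c)/(a + c*x2/a)"
  define S2 where "S2 = y2/(a + c*x2/a)"
  define C3 where "C3 = (x3+c)/(a + c*x3/a)"
  define S3 where "S3 = y3/(a + c*x3/a)"
  have u1: "C1^2+S1^2 = 1" unfolding C1_def S1_def using focal(2)[OF ab cdef e1] .
  have u2: "C2^2+S2^2 = 1" unfolding C2_def S2_def using focal(2)[OF ab cdef e2] .
  have u3: "C3^2+S3^2 = 1" unfolding C3_def S3_def using focal(2)[OF ab cdef e3] .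
  have m12: "(C1,S1) \<noteq> (C2,S2)" using focal_inj[OF ab cdef e1 e2] n12 unfolding C1_def S1_def C2_def S2_def by blast
  have m23: "(C2,S2) \<noteq> (C3,S3)" using focal_inj[OF ab cdef e2 e3] n23 unfolding C3_def S3_def C2_def S2_def by blast
  have m13: "(C1,S1) \<noteq> (C3,S3)" using focal_inj[OF ab cdef e1 e3] n13 unfolding C1_def S1_def C3_def S3_def by blast
  define lam where "lam = a^2*b^2*(gg a b (x1,y1) (x2,y2))^2 / hh (x1,y1) (x2,y2)"
  have l13: "a^2*b^2*(gg a b (x1,y1) (x3,y3))^2 / hh (x1,y1) (x3,y3) = lam"
  proof -
    have "(gg a b (x1,y1) (x3,y3))^2 / hh (x1,y1) (x3,y3) = (gg a b (x1,y1) (x2,y2))^2 / hh (x1,y1) (x2,y2)"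
      using refl_eq[OF nb1 a0 ab(2)] n13 n12 by auto
    thus ?thesis unfolding lam_def by (metis times_divide_eq_right)
  qed
  have l23: "a^2*b^2*(gg a b (x2,y2) (x3,y3))^2 / hh (x2,y2) (x3,y3) = lam"
  proof -
    have "(gg a b (x2,y2) (x1,y1))^2 / hh (x2,y2) (x1,y1) = (gg a b (x2,y2) (x3,y3))^2 / hh (x2,y2) (x3,y3)"
      using refl_eq[OF nb2 a0 ab(2)] n12 n23 by auto
    hence "(gg a b (x1,y1) (x2,y2))^2 / hh (x1,y1) (x2,y2) = (gg a b (x2,y2) (x3,y3))^2 / hh (x2,y2) (x3,y3)"
      using gg_sym[OF e1 e2] hh_sym by metis
    thus ?thesis unfolding lam_def by (metis times_divide_eq_right)
  qed
  have lam0: "lam \<ge> 0" unfolding lam_def hh_def by simp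
  define D where "D = a^2*b^2+lam*c^2"
  have D0: "D > 0" unfolding D_def using a0 ab lam0 by (simp add: add_pos_nonneg)
  define K0 where "K0 = (a^2*b^2 + lam*(b^2-3*a^2))/D"
  define K1 where "K1 = 2*lam*a*c/D"
  have ch: "C*C'+S*S' = K0 + K1*(C+C')" if "D*(C*C'+S*S') = a^2*b^2 + lam*(b^2-3*a^2) + 2*lam*a*c*(C+C')"
    for C C' S S' :: real
  proof -
    have "C*C'+S*S' = (a^2*b^2 + lam*(b^2-3*a^2) + 2*lam*a*c*(C+C'))/D" using that D0 by (simp add: field_simps)
    thus ?thesis unfolding K0_def K1_def by (simp add: add_divide_distrib)
  qed
  have r12: "C1*C2+S1*S2 = K0 + K1*(C1+C2)"
    apply (rule ch) using chord[OF ab cdef e1 e2 n12] unfolding lam_def[symmetric] D_def C1_def C2_def S1_def S2_def .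
  have r13: "C1*C3+S1*S3 = K0 + K1*(C1+C3)"
    apply (rule ch) using chord[OF ab cdef e1 e3 n13] unfolding l13 D_def C1_def C3_def S1_def S3_def .
  have r23: "C2*C3+S2*S3 = K0 + K1*(C2+C3)"
    apply (rule ch) using chord[OF ab cdef e2 e3 n23] unfolding l23 D_def C2_def C3_def S2_def S3_def .
  have cr: "2*K0+1+K1^2 = 0 \<and> C1+C2+C3 = K1 \<and> S1+S2+S3 = 0"
    using core[OF u1 u2 u3 m12 m23 m13 r12 r23 r13] .
  have fa: "K1 > 0 \<and> c*K1 = (2*a^2-b^2-\<delta>)/a \<and> a*K1 - c*(K1^2+3)/2 + c*(2*a^2-b^2-\<delta>)/a^2 = 0"
    using final_alg[OF ab cdef assms(5) lam0 K0_def[unfolded D_def] K1_def[unfolded D_def]] cr by simp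
  define M where "M = 2*a^2-b^2-\<delta>"
  define z1 where "z1 = Complex C1 S1"
  define z2 where "z2 = Complex C2 S2"
  define z3 where "z3 = Complex C3 S3"
  have cz: "cmod z1 = 1" "cmod z2 = 1" "cmod z3 = 1"
    unfolding z1_def z2_def z3_def using u1 u2 u3 by (simp_all add: complex_norm)
  have sz: "z1+z2+z3 = of_real K1" unfolding z1_def z2_def z3_def using cr by (simp add: complex_eq_iff)
  have A: "a*K1 - c*(K1^2+3)/2 + c*M/a^2 = 0" using fa unfolding M_def by simp
  define WX where "WX = (a - c*C1)*C1 + (a - c*C2)*C2 + (a - c*C3)*C3 + c*M/a^2"
  define WY where "WY = (a - c*C1)*S1 + (a - c*C2)*S2 + (a - c*C3)*S3"
  have W: "sqrt (WX^2+WY^2) = M/a"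
  proof -
    have "(of_real (a - c*Re z1))*z1 + (of_real (a - c*Re z2))*z2 + (of_real (a - c*Re z3))*z3 + of_real (c*M/a^2)
       = Complex WX WY" unfolding z1_def z2_def z3_def WX_def WY_def by (simp add: complex_eq_iff)
    hence "cmod (Complex WX WY) = \<bar>c*K1\<bar>" using cplx_final[OF cz sz A] by simp
    moreover have "\<bar>c*K1\<bar> = M/a"
    proof -
      have "c*K1 > 0" using fa c0 by (metis mult_pos_pos)
      hence "\<bar>c*K1\<bar> = c*K1" by simp
      thus ?thesis using fa unfolding M_def by simp
    qed
    ultimately show ?thesis by (simp add: complex_norm)
  qed
  have i1: "invert (-c,0) \<rho> P1 = (-c + \<rho>^2*(a - c*C1)*C1/b^2, \<rho>^2*(a - c*C1)*S1/b^2)"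
    unfolding P1 C1_def S1_def by (rule inv_pt[OF ab cdef e1])
  have i2: "invert (-c,0) \<rho> P2 = (-c + \<rho>^2*(a - c*C2)*C2/b^2, \<rho>^2*(a - c*C2)*S2/b^2)"
    unfolding P2 C2_def S2_def by (rule inv_pt[OF ab cdef e2])
  have i3: "invert (-c,0) \<rho> P3 = (-c + \<rho>^2*(a - c*C3)*C3/b^2, \<rho>^2*(a - c*C3)*S3/b^2)"
    unfolding P3 C3_def S3_def by (rule inv_pt[OF ab cdef e3])
  have diff: "(1/3) *\<^sub>R (invert (-c, 0) \<rho> P1 + invert (-c, 0) \<rho> P2 + invert (-c, 0) \<rho> P3)
              - (- c * (1 + \<rho>^2 * (2 * a^2 - b^2 - \<delta>) / (3 * a^2 * b^2)), 0)
           = (\<rho>^2/(3*b^2)*WX, \<rho>^2/(3*b^2)*WY)"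
    unfolding i1 i2 i3 WX_def WY_def M_def using a0 ab by (simp add: field_simps)
  have "dist ((1/3) *\<^sub>R (invert (-c, 0) \<rho> P1 + invert (-c, 0) \<rho> P2 + invert (-c, 0) \<rho> P3))
              (- c * (1 + \<rho>^2 * (2 * a^2 - b^2 - \<delta>) / (3 * a^2 * b^2)), 0)
        = sqrt ((\<rho>^2/(3*b^2)*WX)^2 + (\<rho>^2/(3*b^2)*WY)^2)"
    unfolding dist_norm diff by (simp add: norm_Pair power_divide)
  also have "\<dots> = \<rho>^2/(3*b^2) * sqrt (WX^2+WY^2)"
  proof -
    have "(\<rho>^2/(3*b^2)*WX)^2 + (\<rho>^2/(3*b^2)*WY)^2 = (\<rho>^2/(3*b^2))^2 * (WX^2+WY^2)"
      by (simp add: power_mult_distrib power_divide algebra_simps add_divide_distrib)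
    thus ?thesis by (simp add: real_sqrt_mult)
  qed
  also have "\<dots> = \<rho>^2 * (2 * a^2 - b^2 - \<delta>) / (3 * a * b^2)" unfolding W M_def by simp
  finally show ?thesis .
qed

end
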